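(* For any $a,b,c,d\in\mathbb R$, $$3\max(a,b,c,d)+\max(a,d)+\max(b,d)+\max(c,d)\le2\max(a,b,d)+2\max(a,c,d)+2\max(b,c,d).$$ *)

theory Defs
  imports Complex_Main
begin

end

theory Submission
  imports Defs
begin

theorem lemma11:
  fixes a b c d :: real
  shows "3 * max (max a b) (max c d) + max a d + max b d + max c d
         \<le> 2 * max (max a b) d + 2 * max (max a c) d + 2 * max (max b c) d"
  by (simp add: max_def; linarith?)

end
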